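(* Let $f_1,\dots,f_n:\mathbb{R}^p\to\mathbb{R}$ be continuously differentiable, let $m>0$, and consider $g(x)=\frac1n\sum_{i=1}^nf_i(x)+\frac m2\|x\|^2$ with minimizer $x^*$. Assume $\sum_{i=1}^nf_i\in\mathcal F(0,L)$ and $i_k$ sampled IID uniformly from $\{1,\dots,n\}$. Consider SDCA with stepsize $\alpha$ initialized from arbitrary $y_i^0\in\mathbb{R}^p$. 1. If every $f_i\in\mathcal F(0,L)$, then for any $0<\alpha\le\frac2{L+2mn}$, $$\mathbb{E}\left[\|x^k-x^*\|^2+\frac{\alpha}{(1-\alpha mn)mn}\sum_{i=1}^n\|y_i^k+\nabla f_i(x^* )\|^2\right]\le(1-m\alpha)^kR^0,$$ where $R^0=\|x^0-x^*\|^2+\frac{\alpha}{(1-\alpha mn)mn}\sum_i\|y_i^0+\nabla f_i(x^* )\|^2$. 2. If every $f_i$ is $L$-smooth, then the bound of item 1 holds for any $0<\alpha\le\frac m{L^2+m^2n}$. In particular, for $\alpha=\frac m{m^2n+L^2}$, $$\mathbb{E}\left[\|x^k-x^*\|^2+\frac1{L^2n}\sum_{i=1}^n\|y_i^k+\nabla f_i(x^* )\|^2\right]\le\left(1-\frac{m^2}{m^2n+L^2}\right)^kR^0,$$ where $R^0=\|x^0-x^*\|^2+\frac1{L^2n}\sum_i\|y_i^0+\nabla f_i(x^* )\|^2$.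
   Context: A continuously differentiable $f:\mathbb{R}^p\to\mathbb{R}$ is $L$-smooth if $\|\nabla f(x)-\nabla f(y)\|\le L\|x-y\|$ for all $x,y$; $\mathcal F(0,L)$ denotes the convex, continuously differentiable, $L$-smooth functions. SDCA (without duality): $x^k=\frac1{mn}\sum_{i=1}^ny_i^k$ for all $k\ge0$, and $y_i^{k+1}=y_i^k-\alpha mn(\nabla f_i(x^k)+y_i^k)$ if $i=i_k$, $y_i^{k+1}=y_i^k$ otherwise. Expectation is over the random indices. *)

theory Defs
  imports "HOL-Analysis.Analysis"
begin

text \<open>SDCA (without duality). Components are indexed by 0..n-1.
  gr i is the gradient of f i, y0 the initial dual variables,
  I the sequence of sampled indices (I k = i_k).
  sdca_y ... k i is y_i^k.\<close>

primrec sdca_y :: "nat \<Rightarrow> real \<Rightarrow> real \<Rightarrow> (nat \<Rightarrow> 'a::real_vector \<Rightarrow> 'a)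
    \<Rightarrow> (nat \<Rightarrow> 'a) \<Rightarrow> (nat \<Rightarrow> nat) \<Rightarrow> nat \<Rightarrow> nat \<Rightarrow> 'a" where
  "sdca_y n m \<alpha> gr y0 I 0 = y0"
| "sdca_y n m \<alpha> gr y0 I (Suc k) =
     (let yk = sdca_y n m \<alpha> gr y0 I k;
          xk = (1 / (m * real n)) *\<^sub>R (\<Sum>j<n. yk j)
      in (\<lambda>i. if i = I k then yk i - (\<alpha> * m * real n) *\<^sub>R (gr i xk + yk i) else yk i))"

definition sdca_x :: "nat \<Rightarrow> real \<Rightarrow> real \<Rightarrow> (nat \<Rightarrow> 'a::real_vector \<Rightarrow> 'a)
    \<Rightarrow> (nat \<Rightarrow> 'a) \<Rightarrow> (nat \<Rightarrow> nat) \<Rightarrow> nat \<Rightarrow> 'a" where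
  "sdca_x n m \<alpha> gr y0 I k = (1 / (m * real n)) *\<^sub>R (\<Sum>j<n. sdca_y n m \<alpha> gr y0 I k j)"

text \<open>Expectation over i_0,...,i_{k-1} IID uniform on {0..<n}: the average over
  all n^k index sequences (only I j for j < k influences step k).\<close>
definition expect_idx :: "nat \<Rightarrow> nat \<Rightarrow> ((nat \<Rightarrow> nat) \<Rightarrow> real) \<Rightarrow> real" where
  "expect_idx n k F = (\<Sum>I\<in>PiE {..<k} (\<lambda>_. {..<n}). F I) / real n ^ k"

definition L_smooth_grad :: "real \<Rightarrow> ('a::real_normed_vector \<Rightarrow> 'a) \<Rightarrow> bool" where
  "L_smooth_grad L G \<longleftrightarrow> (\<forall>x y. norm (G x - G y) \<le> L * norm (x - y))"

definition in_F0L :: "real \<Rightarrow> ('a::real_normed_vector \<Rightarrow> real) \<Rightarrow> ('a \<Rightarrow> 'a) \<Rightarrow> bool" where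
  "in_F0L L h G \<longleftrightarrow> convex_on UNIV h \<and> L_smooth_grad L G"

end

theory Submission
  imports Defs
begin


definition xo :: "nat \<Rightarrow> real \<Rightarrow> (nat \<Rightarrow> 'a::real_vector) \<Rightarrow> 'a" where
  "xo n m y = (1 / (m * real n)) *\<^sub>R (\<Sum>j<n. y j)"

definition up :: "nat \<Rightarrow> real \<Rightarrow> real \<Rightarrow> (nat \<Rightarrow> 'a::real_vector \<Rightarrow> 'a) \<Rightarrow> (nat \<Rightarrow> 'a) \<Rightarrow> nat \<Rightarrow> nat \<Rightarrow> 'a" where
  "up n m \<alpha> gr y i = (\<lambda>j. if j = i then y j - (\<alpha> * m * real n) *\<^sub>R (gr j (xo n m y) + y j) else y j)"

lemma sdca_y_Suc': "sdca_y n m \<alpha> gr y0 I (Suc k) = up n m \<alpha> gr (sdca_y n m \<alpha> gr y0 I k) (I k)"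
  by (auto simp: up_def xo_def Let_def)

lemma sdca_x_xo: "sdca_x n m \<alpha> gr y0 I k = xo n m (sdca_y n m \<alpha> gr y0 I k)"
  by (simp add: sdca_x_def xo_def)

lemma sdca_y_dep: "(\<And>j. j < k \<Longrightarrow> I j = J j) \<Longrightarrow> sdca_y n m \<alpha> gr y0 I k = sdca_y n m \<alpha> gr y0 J k"
  by (induction k) (simp_all add: sdca_y_Suc')

lemma sum_PiE_Suc:
  "(\<Sum>J\<in>PiE {..<Suc k} (\<lambda>_. {..<n}). F J) = (\<Sum>I\<in>PiE {..<k} (\<lambda>_. {..<n}). \<Sum>i<n. F (I(k:=i)))"
proof -
  have e: "{..<Suc k} = insert k {..<k}" by auto
  have "(\<Sum>J\<in>PiE {..<Suc k} (\<lambda>_. {..<n}). F J)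
      = (\<Sum>p\<in>{..<n} \<times> PiE {..<k} (\<lambda>_. {..<n}). F ((\<lambda>(y, g). g(k := y)) p))"
    unfolding e PiE_insert_eq
    by (subst sum.reindex) (auto intro: inj_combinator[of k "{..<k}" "\<lambda>_. {..<n}", simplified])
  also have "\<dots> = (\<Sum>i<n. \<Sum>I\<in>PiE {..<k} (\<lambda>_. {..<n}). F (I(k:=i)))"
    by (simp add: sum.cartesian_product case_prod_unfold)
  also have "\<dots> = (\<Sum>I\<in>PiE {..<k} (\<lambda>_. {..<n}). \<Sum>i<n. F (I(k:=i)))"
    by (rule sum.swap)
  finally show ?thesis .
qed

definition Ly :: "nat \<Rightarrow> real \<Rightarrow> (nat \<Rightarrow> 'a::real_inner \<Rightarrow> 'a) \<Rightarrow> 'a \<Rightarrow> real \<Rightarrow> (nat \<Rightarrow> 'a) \<Rightarrow> real" where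
  "Ly n m gr xs c y = (norm (xo n m y - xs))\<^sup>2 + c * (\<Sum>i<n. (norm (y i + gr i xs))\<^sup>2)"

lemma iterate:
  fixes gr :: "nat \<Rightarrow> 'a::real_inner \<Rightarrow> 'a"
  assumes n: "n \<ge> 1" and q: "0 \<le> q"
    and step: "\<And>y. (\<Sum>i<n. Ly n m gr xs c (up n m \<alpha> gr y i)) \<le> real n * q * Ly n m gr xs c y"
  shows "expect_idx n k (\<lambda>I. Ly n m gr xs c (sdca_y n m \<alpha> gr y0 I k)) \<le> q ^ k * Ly n m gr xs c y0"
proof (induction k)
  case 0
  then show ?case by (simp add: expect_idx_def)
next
  case (Suc k)
  let ?P = "PiE {..<k} (\<lambda>_. {..<n})"
  let ?Y = "\<lambda>I. sdca_y n m \<alpha> gr y0 I k"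
  have npos: "real n > 0" using n by simp
  have eq: "sdca_y n m \<alpha> gr y0 (I(k:=i)) (Suc k) = up n m \<alpha> gr (?Y I) i" for I i
  proof -
    have "sdca_y n m \<alpha> gr y0 (I(k:=i)) k = ?Y I" by (rule sdca_y_dep) simp
    then show ?thesis by (simp only: sdca_y_Suc' fun_upd_same)
  qed
  have "expect_idx n (Suc k) (\<lambda>I. Ly n m gr xs c (sdca_y n m \<alpha> gr y0 I (Suc k)))
      = (\<Sum>I\<in>?P. \<Sum>i<n. Ly n m gr xs c (up n m \<alpha> gr (?Y I) i)) / real n ^ Suc k"
    unfolding expect_idx_def sum_PiE_Suc eq ..
  also have "\<dots> \<le> (\<Sum>I\<in>?P. real n * q * Ly n m gr xs c (?Y I)) / real n ^ Suc k"
    by (intro divide_right_mono sum_mono step) simp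
  also have "\<dots> = q * expect_idx n k (\<lambda>I. Ly n m gr xs c (?Y I))"
    using npos by (simp add: expect_idx_def sum_distrib_left[symmetric] field_simps)
  also have "\<dots> \<le> q * (q ^ k * Ly n m gr xs c y0)"
    using Suc q by (rule mult_left_mono)
  finally show ?case by simp
qed

lemma norm_diff_sq: "(norm (a - t *\<^sub>R b))\<^sup>2 = (norm a)\<^sup>2 - 2 * t * (a \<bullet> b) + t\<^sup>2 * (norm b)\<^sup>2"
  for a b :: "'a::real_inner"
  unfolding power2_norm_eq_inner by (simp add: inner_diff inner_commute algebra_simps power2_eq_square)

lemma arith_id:
  fixes A P Dd R E S c \<alpha> \<beta> \<gamma> :: real
  assumes h1: "c * \<beta> = \<gamma>" and h2: "\<alpha>\<^sup>2 + c * \<beta>\<^sup>2 = \<gamma>"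
  shows "A - 2 * \<alpha> * P + \<alpha>\<^sup>2 * (Dd + 2 * R + E) + c * (S - 2 * \<beta> * (R + E) + \<beta>\<^sup>2 * (Dd + 2 * R + E))
     = A + c * S - 2 * \<alpha> * P + \<gamma> * (Dd - E)"
proof -
  have "A - 2 * \<alpha> * P + \<alpha>\<^sup>2 * (Dd + 2 * R + E) + c * (S - 2 * \<beta> * (R + E) + \<beta>\<^sup>2 * (Dd + 2 * R + E))
     = A - 2 * \<alpha> * P + (\<alpha>\<^sup>2 + c * \<beta>\<^sup>2) * (Dd + 2 * R + E) + c * S - 2 * (c * \<beta>) * (R + E)"
    by (simp add: algebra_simps)
  also have "\<dots> = A - 2 * \<alpha> * P + \<gamma> * (Dd + 2 * R + E) + c * S - 2 * \<gamma> * (R + E)"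
    unfolding h1 h2 ..
  also have "\<dots> = A + c * S - 2 * \<alpha> * P + \<gamma> * (Dd - E)"
    by (simp add: algebra_simps)
  finally show ?thesis .
qed

lemma norm_add_sq: "(norm (a + b))\<^sup>2 = (norm a)\<^sup>2 + 2 * (a \<bullet> b) + (norm b)\<^sup>2"
  for a b :: "'a::real_inner"
  by (simp add: power2_norm_eq_inner inner_add inner_commute algebra_simps)

lemma one_step:
  fixes gr :: "nat \<Rightarrow> 'a::real_inner \<Rightarrow> 'a"
  assumes n: "n \<ge> 1" and m: "m > 0" and a: "\<alpha> > 0" and b: "\<alpha> * m * real n < 1"
    and fp: "(\<Sum>i<n. gr i xs) = - (m * real n) *\<^sub>R xs"
    and H: "\<alpha> / (1 - \<alpha> * m * real n) * (\<Sum>i<n. (norm (gr i (xo n m y) - gr i xs))\<^sup>2)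
       \<le> m * real n * (norm (xo n m y - xs))\<^sup>2 + 2 * ((xo n m y - xs) \<bullet> (\<Sum>i<n. gr i (xo n m y) - gr i xs))"
    and c: "c = \<alpha> / ((1 - \<alpha> * m * real n) * m * real n)"
  shows "(\<Sum>i<n. Ly n m gr xs c (up n m \<alpha> gr y i)) \<le> real n * (1 - m * \<alpha>) * Ly n m gr xs c y"
proof -
  define x where "x = xo n m y"
  define u where "u = x - xs"
  define e where "e i = y i + gr i xs" for i
  define d where "d i = gr i x - gr i xs" for i
  define \<beta> where "\<beta> = \<alpha> * m * real n"
  define \<gamma> where "\<gamma> = \<alpha>\<^sup>2 / (1 - \<beta>)"
  define S where "S = (\<Sum>i<n. (norm (e i))\<^sup>2)"
  have npos: "real n > 0" using n by simp
  have b1: "1 - \<beta> > 0" using b by (simp add: \<beta>_def)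
  have mn: "m * real n \<noteq> 0" using m npos by simp
  have sy: "(\<Sum>j<n. y j) = (m * real n) *\<^sub>R x"
    using mn by (simp add: x_def xo_def)
  have se: "(\<Sum>i<n. e i) = (m * real n) *\<^sub>R u"
    by (simp add: e_def sum.distrib sy fp u_def scaleR_diff_right)
  have per: "Ly n m gr xs c (up n m \<alpha> gr y i)
      = (norm u)\<^sup>2 + c * S - 2 * \<alpha> * (u \<bullet> (d i + e i)) + \<gamma> * ((norm (d i))\<^sup>2 - (norm (e i))\<^sup>2)"
    if i: "i < n" for i
  proof -
    have w: "gr i x + y i = d i + e i" by (simp add: d_def e_def)
    have upj: "up n m \<alpha> gr y i j = y j - (if j = i then \<beta> *\<^sub>R (d i + e i) else 0)" for j
      by (simp add: up_def x_def[symmetric] \<beta>_def w)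
    have "(\<Sum>j<n. up n m \<alpha> gr y i j) = (\<Sum>j<n. y j) - \<beta> *\<^sub>R (d i + e i)"
      unfolding upj sum_subtractf using i by (simp add: sum.delta)
    then have x1: "xo n m (up n m \<alpha> gr y i) = x - \<alpha> *\<^sub>R (d i + e i)"
      using mn by (simp add: xo_def sy \<beta>_def scaleR_diff_right)
    have nj: "(norm (up n m \<alpha> gr y i j + gr j xs))\<^sup>2 = (norm (e j))\<^sup>2
        + (if j = i then (norm (e i - \<beta> *\<^sub>R (d i + e i)))\<^sup>2 - (norm (e i))\<^sup>2 else 0)" for j
      by (simp add: upj e_def algebra_simps)
    have s1: "(\<Sum>j<n. (norm (up n m \<alpha> gr y i j + gr j xs))\<^sup>2)
        = S + ((norm (e i - \<beta> *\<^sub>R (d i + e i)))\<^sup>2 - (norm (e i))\<^sup>2)"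
      unfolding nj sum.distrib S_def using i by (simp add: sum.delta)
    have "Ly n m gr xs c (up n m \<alpha> gr y i) = (norm (u - \<alpha> *\<^sub>R (d i + e i)))\<^sup>2
        + c * (S + ((norm (e i - \<beta> *\<^sub>R (d i + e i)))\<^sup>2 - (norm (e i))\<^sup>2))"
      unfolding Ly_def x1 s1 by (simp add: u_def algebra_simps)
    also have "\<dots> = (norm u)\<^sup>2 - 2 * \<alpha> * (u \<bullet> (d i + e i)) + \<alpha>\<^sup>2 * ((norm (d i))\<^sup>2 + 2 * (d i \<bullet> e i) + (norm (e i))\<^sup>2)
        + c * (S - 2 * \<beta> * (e i \<bullet> d i + (norm (e i))\<^sup>2) + \<beta>\<^sup>2 * ((norm (d i))\<^sup>2 + 2 * (d i \<bullet> e i) + (norm (e i))\<^sup>2))"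
      unfolding norm_diff_sq norm_add_sq by (simp add: inner_add_right power2_norm_eq_inner[symmetric])
    also have "\<dots> = (norm u)\<^sup>2 + c * S - 2 * \<alpha> * (u \<bullet> (d i + e i)) + \<gamma> * ((norm (d i))\<^sup>2 - (norm (e i))\<^sup>2)"
      unfolding inner_commute[of "e i" "d i"]
    proof (rule arith_id)
      show "c * \<beta> = \<gamma>" using b1 mn unfolding c \<gamma>_def \<beta>_def by (simp add: field_simps power2_eq_square)
      show "\<alpha>\<^sup>2 + c * \<beta>\<^sup>2 = \<gamma>" using b1 mn unfolding c \<gamma>_def \<beta>_def by (simp add: field_simps power2_eq_square)
    qed
    finally show ?thesis .
  qed
  have "(\<Sum>i<n. Ly n m gr xs c (up n m \<alpha> gr y i))
      = real n * ((norm u)\<^sup>2 + c * S) - 2 * \<alpha> * (u \<bullet> ((\<Sum>i<n. d i) + (\<Sum>i<n. e i)))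
        + \<gamma> * ((\<Sum>i<n. (norm (d i))\<^sup>2) - S)"
    by (simp add: per sum.distrib sum_subtractf inner_sum_right inner_add_right sum_distrib_left[symmetric] S_def)
  also have "\<dots> = real n * ((norm u)\<^sup>2 + c * S) - 2 * \<alpha> * (u \<bullet> (\<Sum>i<n. d i)) - 2 * \<alpha> * m * real n * (norm u)\<^sup>2
        + \<gamma> * ((\<Sum>i<n. (norm (d i))\<^sup>2) - S)"
    by (simp add: se inner_add_right power2_norm_eq_inner algebra_simps)
  also have "\<dots> \<le> real n * (1 - m * \<alpha>) * ((norm u)\<^sup>2 + c * S)"
  proof -
    have H': "\<alpha> / (1 - \<beta>) * (\<Sum>i<n. (norm (d i))\<^sup>2) \<le> m * real n * (norm u)\<^sup>2 + 2 * (u \<bullet> (\<Sum>i<n. d i))"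
      using H by (simp add: d_def u_def x_def \<beta>_def)
    have "\<gamma> * (\<Sum>i<n. (norm (d i))\<^sup>2) = \<alpha> * (\<alpha> / (1 - \<beta>) * (\<Sum>i<n. (norm (d i))\<^sup>2))"
      by (simp add: \<gamma>_def power2_eq_square)
    also have "\<dots> \<le> \<alpha> * (m * real n * (norm u)\<^sup>2 + 2 * (u \<bullet> (\<Sum>i<n. d i)))"
      using H' a by (intro mult_left_mono) auto
    finally have h: "\<gamma> * (\<Sum>i<n. (norm (d i))\<^sup>2) \<le> \<alpha> * (m * real n * (norm u)\<^sup>2 + 2 * (u \<bullet> (\<Sum>i<n. d i)))" .
    have g: "\<gamma> = real n * m * \<alpha> * c"
      using b1 mn unfolding c \<gamma>_def \<beta>_def by (simp add: field_simps power2_eq_square)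
    show ?thesis using h unfolding g by (simp add: algebra_simps)
  qed
  also have "\<dots> = real n * (1 - m * \<alpha>) * Ly n m gr xs c y"
    by (simp add: Ly_def u_def x_def S_def e_def)
  finally show ?thesis .
qed



lemma line_deriv:
  fixes F :: "'a::real_inner \<Rightarrow> real"
  assumes d: "\<And>z. (F has_derivative (\<lambda>h. G z \<bullet> h)) (at z)"
  shows "((\<lambda>t. F (x + t *\<^sub>R h)) has_real_derivative (G (x + t *\<^sub>R h) \<bullet> h)) (at t)"
proof -
  have l: "((\<lambda>t. x + t *\<^sub>R h) has_derivative (\<lambda>s. s *\<^sub>R h)) (at t)"
    by (auto intro!: derivative_eq_intros)
  have "((\<lambda>t. F (x + t *\<^sub>R h)) has_derivative (\<lambda>s. G (x + t *\<^sub>R h) \<bullet> (s *\<^sub>R h))) (at t)"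
    using has_derivative_compose[OF l d] by (simp add: o_def)
  moreover have "(\<lambda>s. G (x + t *\<^sub>R h) \<bullet> (s *\<^sub>R h)) = (*) (G (x + t *\<^sub>R h) \<bullet> h)"
    by (auto simp: fun_eq_iff)
  ultimately show ?thesis
    unfolding has_field_derivative_def by simp
qed

lemma tangent_ineq:
  fixes F :: "'a::real_inner \<Rightarrow> real"
  assumes cv: "convex_on UNIV F" and d: "\<And>z. (F has_derivative (\<lambda>h. G z \<bullet> h)) (at z)"
  shows "F y \<ge> F x + G x \<bullet> (y - x)"
proof -
  define h where "h = y - x"
  define \<psi> where "\<psi> t = F (x + t *\<^sub>R h)" for t
  have cpsi: "convex_on UNIV \<psi>"
  proof (rule convex_onI)
    fix t a b :: real assume t: "0 < t" "t < 1"
    have "x + ((1 - t) *\<^sub>R a + t *\<^sub>R b) *\<^sub>R h = (1 - t) *\<^sub>R (x + a *\<^sub>R h) + t *\<^sub>R (x + b *\<^sub>R h)"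
      by (simp add: algebra_simps)
    then show "\<psi> ((1 - t) *\<^sub>R a + t *\<^sub>R b) \<le> (1 - t) * \<psi> a + t * \<psi> b"
      unfolding \<psi>_def using convex_onD[OF cv, of t] t by simp
  qed simp
  have dpsi: "(\<psi> has_real_derivative (G x \<bullet> h)) (at 0)"
    using line_deriv[OF d, of x h 0] by (simp add: \<psi>_def[abs_def])
  have "\<psi> 1 - \<psi> 0 \<ge> (G x \<bullet> h) * (1 - 0)"
    by (rule convex_on_imp_above_tangent[OF cpsi]) (use dpsi in auto)
  then show ?thesis by (simp add: \<psi>_def h_def)
qed

lemma descent:
  fixes F :: "'a::real_inner \<Rightarrow> real"
  assumes d: "\<And>z. (F has_derivative (\<lambda>h. G z \<bullet> h)) (at z)" and sm: "L_smooth_grad L G"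
  shows "F y \<le> F x + G x \<bullet> (y - x) + L / 2 * (norm (y - x))\<^sup>2"
proof -
  define h where "h = y - x"
  define \<phi> where "\<phi> t = F (x + t *\<^sub>R h) - t * (G x \<bullet> h) - L / 2 * t\<^sup>2 * (norm h)\<^sup>2" for t
  have "\<phi> 0 \<ge> \<phi> 1"
  proof (rule DERIV_nonpos_imp_nonincreasing[where f=\<phi>])
    fix t :: real assume t: "0 \<le> t" "t \<le> 1"
    have D: "(\<phi> has_real_derivative (G (x + t *\<^sub>R h) \<bullet> h - G x \<bullet> h - L / 2 * (2 * t) * (norm h)\<^sup>2)) (at t)"
      unfolding \<phi>_def
      by (intro DERIV_diff DERIV_cmult line_deriv[OF d] DERIV_cmult_right)
         (auto intro!: derivative_eq_intros)
    have "G (x + t *\<^sub>R h) \<bullet> h - G x \<bullet> h = (G (x + t *\<^sub>R h) - G x) \<bullet> h" by (simp add: inner_diff_left)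
    also have "\<dots> \<le> norm (G (x + t *\<^sub>R h) - G x) * norm h" by (rule norm_cauchy_schwarz)
    also have "\<dots> \<le> (L * norm (t *\<^sub>R h)) * norm h"
      using sm[unfolded L_smooth_grad_def, rule_format, of "x + t *\<^sub>R h" x] by (intro mult_right_mono) auto
    also have "\<dots> = L * t * (norm h)\<^sup>2" using t by (simp add: power2_eq_square)
    finally show "\<exists>y. DERIV \<phi> t :> y \<and> y \<le> 0" using D by (intro exI[of _ _]) (auto simp: algebra_simps)
  qed simp
  then show ?thesis by (simp add: \<phi>_def h_def)
qed



lemma key_ineq:
  fixes f :: "'a::real_inner \<Rightarrow> real"
  assumes F: "in_F0L L f G" and d: "\<And>z. (f has_derivative (\<lambda>h. G z \<bullet> h)) (at z)" and L: "L > 0"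
  shows "f b \<ge> f a + G a \<bullet> (b - a) + 1 / (2 * L) * (norm (G b - G a))\<^sup>2"
proof -
  have cv: "convex_on UNIV f" and sm: "L_smooth_grad L G" using F by (auto simp: in_F0L_def)
  define g where "g = G b - G a"
  define z where "z = b - (1 / L) *\<^sub>R g"
  have desc: "f z \<le> f b + G b \<bullet> (z - b) + L / 2 * (norm (z - b))\<^sup>2" by (rule descent[OF d sm])
  have tan: "f z \<ge> f a + G a \<bullet> (z - a)" by (rule tangent_ineq[OF cv d])
  have e1: "G a \<bullet> (z - a) = G a \<bullet> (b - a) + G a \<bullet> (z - b)" by (simp add: inner_diff_right)
  have e2: "G b \<bullet> (z - b) - G a \<bullet> (z - b) = - (1 / L) * (norm g)\<^sup>2"
    by (simp add: z_def g_def power2_norm_eq_inner inner_diff_left diff_divide_distrib[symmetric]) (simp add: algebra_simps minus_divide_left)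
  have e3: "L / 2 * (norm (z - b))\<^sup>2 = 1 / (2 * L) * (norm g)\<^sup>2"
    using L by (simp add: z_def power2_eq_square field_simps)
  show ?thesis using desc tan e1 e2 e3 by (simp add: g_def)
qed

lemma cocoercive:
  fixes f :: "'a::real_inner \<Rightarrow> real"
  assumes F: "in_F0L L f G" and d: "\<And>z. (f has_derivative (\<lambda>h. G z \<bullet> h)) (at z)" and L: "L > 0"
  shows "(norm (G y - G x))\<^sup>2 \<le> L * ((G y - G x) \<bullet> (y - x))"
proof -
  have 1: "f y \<ge> f x + G x \<bullet> (y - x) + 1 / (2 * L) * (norm (G y - G x))\<^sup>2" by (rule key_ineq[OF F d L])
  have 2: "f x \<ge> f y + G y \<bullet> (x - y) + 1 / (2 * L) * (norm (G x - G y))\<^sup>2" by (rule key_ineq[OF F d L])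
  have n: "norm (G x - G y) = norm (G y - G x)" by (rule norm_minus_commute)
  have i: "G y \<bullet> (x - y) = - (G y \<bullet> (y - x))" by (simp add: inner_diff_right)
  have "1 / L * (norm (G y - G x))\<^sup>2 \<le> (G y - G x) \<bullet> (y - x)"
    using 1 2 unfolding n i by (simp add: inner_diff_left field_simps)
  then show ?thesis using L by (simp add: field_simps)
qed

lemma monotone_grad:
  fixes F :: "'a::real_inner \<Rightarrow> real"
  assumes cv: "convex_on UNIV F" and d: "\<And>z. (F has_derivative (\<lambda>h. G z \<bullet> h)) (at z)"
  shows "(G y - G x) \<bullet> (y - x) \<ge> 0"
proof -
  have 1: "F y \<ge> F x + G x \<bullet> (y - x)" by (rule tangent_ineq[OF cv d])
  have 2: "F x \<ge> F y + G y \<bullet> (x - y)" by (rule tangent_ineq[OF cv d])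
  have i: "G y \<bullet> (x - y) = - (G y \<bullet> (y - x))" by (simp add: inner_diff_right)
  show ?thesis using 1 2 unfolding i by (simp add: inner_diff_left)
qed



lemma main_bound:
  fixes gr :: "nat \<Rightarrow> 'a::real_inner \<Rightarrow> 'a"
  assumes n: "n \<ge> 1" and m: "m > 0" and a: "\<alpha> > 0" and b: "\<alpha> * m * real n < 1"
    and fp: "(\<Sum>i<n. gr i xs) = - (m * real n) *\<^sub>R xs"
    and H: "\<And>x. \<alpha> / (1 - \<alpha> * m * real n) * (\<Sum>i<n. (norm (gr i x - gr i xs))\<^sup>2)
       \<le> m * real n * (norm (x - xs))\<^sup>2 + 2 * ((x - xs) \<bullet> (\<Sum>i<n. gr i x - gr i xs))"
  shows "expect_idx n k (\<lambda>I.
                (norm (sdca_x n m \<alpha> gr y0 I k - xs))\<^sup>2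
                + \<alpha> / ((1 - \<alpha> * m * real n) * m * real n)
                  * (\<Sum>i<n. (norm (sdca_y n m \<alpha> gr y0 I k i + gr i xs))\<^sup>2))
             \<le> (1 - m * \<alpha>) ^ k *
               ((norm (sdca_x n m \<alpha> gr y0 (\<lambda>_. 0) 0 - xs))\<^sup>2
                + \<alpha> / ((1 - \<alpha> * m * real n) * m * real n)
                  * (\<Sum>i<n. (norm (y0 i + gr i xs))\<^sup>2))"
proof -
  let ?c = "\<alpha> / ((1 - \<alpha> * m * real n) * m * real n)"
  have q: "0 \<le> 1 - m * \<alpha>"
  proof -
    have "m * \<alpha> \<le> \<alpha> * m * real n" using n m a by (simp add: mult_le_cancel_left1)
    then show ?thesis using b by simp
  qed
  have "expect_idx n k (\<lambda>I. Ly n m gr xs ?c (sdca_y n m \<alpha> gr y0 I k)) \<le> (1 - m * \<alpha>) ^ k * Ly n m gr xs ?c y0"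
    by (rule iterate[OF n q]) (rule one_step[OF n m a b fp H refl])
  then show ?thesis by (simp add: Ly_def sdca_x_xo)
qed

lemma fixed_point:
  fixes f :: "nat \<Rightarrow> 'a::real_inner \<Rightarrow> real"
  assumes n: "n \<ge> 1" and m: "m > 0"
    and grad: "\<And>i x. i < n \<Longrightarrow> (f i has_derivative (\<lambda>h. gr i x \<bullet> h)) (at x)"
    and min: "\<And>x. (1 / real n) * (\<Sum>i<n. f i xs) + m / 2 * (norm xs)\<^sup>2
                  \<le> (1 / real n) * (\<Sum>i<n. f i x) + m / 2 * (norm x)\<^sup>2"
  shows "(\<Sum>i<n. gr i xs) = - (m * real n) *\<^sub>R xs"
proof -
  have s: "((\<lambda>x. \<Sum>i<n. f i x) has_derivative (\<lambda>h. \<Sum>i<n. gr i xs \<bullet> h)) (at xs)"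
    by (rule has_derivative_sum) (simp add: grad)
  have q: "((\<lambda>x. x \<bullet> x) has_derivative (\<lambda>h. xs \<bullet> h + h \<bullet> xs)) (at xs)"
    using has_derivative_inner[OF has_derivative_ident has_derivative_ident] by blast
  have D: "((\<lambda>x. (1 / real n) * (\<Sum>i<n. f i x) + m / 2 * (x \<bullet> x)) has_derivative
      (\<lambda>h. (1 / real n) * (\<Sum>i<n. gr i xs \<bullet> h) + m / 2 * (xs \<bullet> h + h \<bullet> xs))) (at xs)"
    by (intro has_derivative_add has_derivative_mult_right s q)
  have ev: "eventually (\<lambda>y. (1 / real n) * (\<Sum>i<n. f i xs) + m / 2 * (xs \<bullet> xs)
      \<le> (1 / real n) * (\<Sum>i<n. f i y) + m / 2 * (y \<bullet> y)) (at xs)"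
    using min by (simp add: power2_norm_eq_inner)
  have z: "(\<lambda>h. (1 / real n) * (\<Sum>i<n. gr i xs \<bullet> h) + m / 2 * (xs \<bullet> h + h \<bullet> xs)) = (\<lambda>h. 0)"
    by (rule has_derivative_local_min[OF D ev])
  define v where "v = (1 / real n) *\<^sub>R (\<Sum>i<n. gr i xs) + m *\<^sub>R xs"
  have vw: "v \<bullet> w = (1 / real n) * ((\<Sum>i<n. gr i xs) \<bullet> w) + m * (xs \<bullet> w)" for w
    by (simp add: v_def inner_add_left)
  have "v \<bullet> v = (1 / real n) * (\<Sum>i<n. gr i xs \<bullet> v) + m / 2 * (xs \<bullet> v + v \<bullet> xs)"
    unfolding vw[of v] by (simp add: inner_sum_left inner_commute[of v xs])
  also have "\<dots> = 0" using fun_cong[OF z, of v] by simp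
  finally have "v = 0" by simp
  then have "real n *\<^sub>R v = 0" by simp
  then show ?thesis using n
    by (simp add: v_def scaleR_add_right algebra_simps eq_neg_iff_add_eq_0)
qed



lemma arith1:
  fixes q L K P A :: real
  assumes "q \<ge> 0" "L > 0" "K \<ge> 0" "K \<le> L * P" "q * L \<le> 2" "A \<ge> 0"
  shows "q * K \<le> A + 2 * P"
proof -
  have P: "P \<ge> 0"
  proof (rule ccontr)
    assume "\<not> P \<ge> 0"
    then have "L * P < 0" using assms(2) by (simp add: mult_pos_neg)
    then show False using assms(3,4) by linarith
  qed
  have "q * K \<le> q * (L * P)" using assms by (intro mult_left_mono) auto
  also have "\<dots> = (q * L) * P" by simp
  also have "\<dots> \<le> 2 * P" using assms P by (intro mult_right_mono) auto
  finally show ?thesis using assms by simp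
qed

lemma arith2:
  fixes q K N U M P :: real
  assumes "q \<ge> 0" "K \<le> N * U" "U \<ge> 0" "q * N \<le> M" "P \<ge> 0"
  shows "q * K \<le> M * U + 2 * P"
proof -
  have "q * K \<le> q * (N * U)" using assms by (intro mult_left_mono) auto
  also have "\<dots> = (q * N) * U" by simp
  also have "\<dots> \<le> M * U" using assms by (intro mult_right_mono) auto
  finally show ?thesis using assms by simp
qed

theorem corollary3:
  fixes f :: "nat \<Rightarrow> 'a::euclidean_space \<Rightarrow> real"
    and gr :: "nat \<Rightarrow> 'a \<Rightarrow> 'a"
    and n :: nat and m L :: real and xs :: 'a and y0 :: "nat \<Rightarrow> 'a"
  assumes n_pos: "n \<ge> 1"
    and m_pos: "m > 0"
    and L_pos: "L > 0"
    and grad: "\<And>i x. i < n \<Longrightarrow> (f i has_derivative (\<lambda>h. gr i x \<bullet> h)) (at x)"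
    and grad_cont: "\<And>i. i < n \<Longrightarrow> continuous_on UNIV (gr i)"
    and min: "\<And>x. (1 / real n) * (\<Sum>i<n. f i xs) + m / 2 * (norm xs)\<^sup>2
                  \<le> (1 / real n) * (\<Sum>i<n. f i x) + m / 2 * (norm x)\<^sup>2"
    and sumF: "in_F0L L (\<lambda>x. \<Sum>i<n. f i x) (\<lambda>x. \<Sum>i<n. gr i x)"
  shows
   "((\<forall>i<n. in_F0L L (f i) (gr i)) \<longrightarrow>
      (\<forall>\<alpha>. 0 < \<alpha> \<and> \<alpha> \<le> 2 / (L + 2 * m * real n) \<longrightarrow>
        (\<forall>k. expect_idx n k (\<lambda>I.
                (norm (sdca_x n m \<alpha> gr y0 I k - xs))\<^sup>2
                + \<alpha> / ((1 - \<alpha> * m * real n) * m * real n)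
                  * (\<Sum>i<n. (norm (sdca_y n m \<alpha> gr y0 I k i + gr i xs))\<^sup>2))
             \<le> (1 - m * \<alpha>) ^ k *
               ((norm (sdca_x n m \<alpha> gr y0 (\<lambda>_. 0) 0 - xs))\<^sup>2
                + \<alpha> / ((1 - \<alpha> * m * real n) * m * real n)
                  * (\<Sum>i<n. (norm (y0 i + gr i xs))\<^sup>2)))))
    \<and>
    ((\<forall>i<n. L_smooth_grad L (gr i)) \<longrightarrow>
      (\<forall>\<alpha>. 0 < \<alpha> \<and> \<alpha> \<le> m / (L\<^sup>2 + m\<^sup>2 * real n) \<longrightarrow>
        (\<forall>k. expect_idx n k (\<lambda>I.
                (norm (sdca_x n m \<alpha> gr y0 I k - xs))\<^sup>2
                + \<alpha> / ((1 - \<alpha> * m * real n) * m * real n)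
                  * (\<Sum>i<n. (norm (sdca_y n m \<alpha> gr y0 I k i + gr i xs))\<^sup>2))
             \<le> (1 - m * \<alpha>) ^ k *
               ((norm (sdca_x n m \<alpha> gr y0 (\<lambda>_. 0) 0 - xs))\<^sup>2
                + \<alpha> / ((1 - \<alpha> * m * real n) * m * real n)
                  * (\<Sum>i<n. (norm (y0 i + gr i xs))\<^sup>2))))
      \<and>
      (let \<alpha> = m / (m\<^sup>2 * real n + L\<^sup>2) in
        \<forall>k. expect_idx n k (\<lambda>I.
                (norm (sdca_x n m \<alpha> gr y0 I k - xs))\<^sup>2
                + 1 / (L\<^sup>2 * real n)
                  * (\<Sum>i<n. (norm (sdca_y n m \<alpha> gr y0 I k i + gr i xs))\<^sup>2))
             \<le> (1 - m\<^sup>2 / (m\<^sup>2 * real n + L\<^sup>2)) ^ k *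
               ((norm (sdca_x n m \<alpha> gr y0 (\<lambda>_. 0) 0 - xs))\<^sup>2
                + 1 / (L\<^sup>2 * real n) * (\<Sum>i<n. (norm (y0 i + gr i xs))\<^sup>2))))"
proof -
  have npos: "real n > 0" using n_pos by simp
  have fp: "(\<Sum>i<n. gr i xs) = - (m * real n) *\<^sub>R xs"
    by (rule fixed_point[OF n_pos m_pos grad min])
  have P1: "\<forall>\<alpha>. 0 < \<alpha> \<and> \<alpha> \<le> 2 / (L + 2 * m * real n) \<longrightarrow>
        (\<forall>k. expect_idx n k (\<lambda>I.
                (norm (sdca_x n m \<alpha> gr y0 I k - xs))\<^sup>2
                + \<alpha> / ((1 - \<alpha> * m * real n) * m * real n)
                  * (\<Sum>i<n. (norm (sdca_y n m \<alpha> gr y0 I k i + gr i xs))\<^sup>2))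
             \<le> (1 - m * \<alpha>) ^ k *
               ((norm (sdca_x n m \<alpha> gr y0 (\<lambda>_. 0) 0 - xs))\<^sup>2
                + \<alpha> / ((1 - \<alpha> * m * real n) * m * real n)
                  * (\<Sum>i<n. (norm (y0 i + gr i xs))\<^sup>2)))"
    if all: "\<forall>i<n. in_F0L L (f i) (gr i)"
  proof (intro allI impI)
    fix \<alpha> k assume ab: "0 < \<alpha> \<and> \<alpha> \<le> 2 / (L + 2 * m * real n)"
    have den: "L + 2 * m * real n > 0" using L_pos m_pos npos by (intro add_pos_pos mult_pos_pos) auto
    have a2: "\<alpha> * (L + 2 * m * real n) \<le> 2" using ab den by (simp add: le_divide_eq)
    have La: "L * \<alpha> > 0" using L_pos ab by simp
    have e: "\<alpha> * (L + 2 * m * real n) = L * \<alpha> + 2 * (\<alpha> * m * real n)" by (simp add: algebra_simps)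
    have b: "\<alpha> * m * real n < 1" using a2 e La by linarith
    have b1: "1 - \<alpha> * m * real n > 0" using b by simp
    show "expect_idx n k (\<lambda>I.
                (norm (sdca_x n m \<alpha> gr y0 I k - xs))\<^sup>2
                + \<alpha> / ((1 - \<alpha> * m * real n) * m * real n)
                  * (\<Sum>i<n. (norm (sdca_y n m \<alpha> gr y0 I k i + gr i xs))\<^sup>2))
             \<le> (1 - m * \<alpha>) ^ k *
               ((norm (sdca_x n m \<alpha> gr y0 (\<lambda>_. 0) 0 - xs))\<^sup>2
                + \<alpha> / ((1 - \<alpha> * m * real n) * m * real n)
                  * (\<Sum>i<n. (norm (y0 i + gr i xs))\<^sup>2))"
    proof (rule main_bound[OF n_pos m_pos])
      show "0 < \<alpha>" using ab by simp
      show "\<alpha> * m * real n < 1" by (rule b)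
      show "(\<Sum>i<n. gr i xs) = - (m * real n) *\<^sub>R xs" by (rule fp)
      fix x
      have co: "(norm (gr i x - gr i xs))\<^sup>2 \<le> L * ((x - xs) \<bullet> (gr i x - gr i xs))" if i: "i < n" for i
        using cocoercive[OF all[rule_format, OF i] grad[OF i] L_pos, of x xs] by (simp add: inner_commute)
      have K: "(\<Sum>i<n. (norm (gr i x - gr i xs))\<^sup>2) \<le> L * ((x - xs) \<bullet> (\<Sum>i<n. gr i x - gr i xs))"
        unfolding inner_sum_right sum_distrib_left using co by (intro sum_mono) auto
      have qL: "\<alpha> / (1 - \<alpha> * m * real n) * L \<le> 2"
        using b1 a2 by (simp add: field_simps)
      show "\<alpha> / (1 - \<alpha> * m * real n) * (\<Sum>i<n. (norm (gr i x - gr i xs))\<^sup>2)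
       \<le> m * real n * (norm (x - xs))\<^sup>2 + 2 * ((x - xs) \<bullet> (\<Sum>i<n. gr i x - gr i xs))"
        by (rule arith1[OF _ L_pos _ K qL]) (use ab b1 m_pos in \<open>auto intro!: sum_nonneg\<close>)
    qed
  qed
  have P2: "\<forall>\<alpha>. 0 < \<alpha> \<and> \<alpha> \<le> m / (L\<^sup>2 + m\<^sup>2 * real n) \<longrightarrow>
        (\<forall>k. expect_idx n k (\<lambda>I.
                (norm (sdca_x n m \<alpha> gr y0 I k - xs))\<^sup>2
                + \<alpha> / ((1 - \<alpha> * m * real n) * m * real n)
                  * (\<Sum>i<n. (norm (sdca_y n m \<alpha> gr y0 I k i + gr i xs))\<^sup>2))
             \<le> (1 - m * \<alpha>) ^ k *
               ((norm (sdca_x n m \<alpha> gr y0 (\<lambda>_. 0) 0 - xs))\<^sup>2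
                + \<alpha> / ((1 - \<alpha> * m * real n) * m * real n)
                  * (\<Sum>i<n. (norm (y0 i + gr i xs))\<^sup>2)))"
    if all: "\<forall>i<n. L_smooth_grad L (gr i)"
  proof (intro allI impI)
    fix \<alpha> k assume ab: "0 < \<alpha> \<and> \<alpha> \<le> m / (L\<^sup>2 + m\<^sup>2 * real n)"
    have den: "L\<^sup>2 + m\<^sup>2 * real n > 0" using L_pos m_pos npos by (simp add: add_pos_pos)
    have a2: "\<alpha> * (L\<^sup>2 + m\<^sup>2 * real n) \<le> m" using ab den by (simp add: le_divide_eq)
    have "\<alpha> * (m\<^sup>2 * real n) < m" using a2 ab L_pos
      by (smt (verit, best) distrib_left mult_pos_pos zero_less_power)
    then have b: "\<alpha> * m * real n < 1" using m_pos by (simp add: power2_eq_square algebra_simps)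
    have b1: "1 - \<alpha> * m * real n > 0" using b by simp
    show "expect_idx n k (\<lambda>I.
                (norm (sdca_x n m \<alpha> gr y0 I k - xs))\<^sup>2
                + \<alpha> / ((1 - \<alpha> * m * real n) * m * real n)
                  * (\<Sum>i<n. (norm (sdca_y n m \<alpha> gr y0 I k i + gr i xs))\<^sup>2))
             \<le> (1 - m * \<alpha>) ^ k *
               ((norm (sdca_x n m \<alpha> gr y0 (\<lambda>_. 0) 0 - xs))\<^sup>2
                + \<alpha> / ((1 - \<alpha> * m * real n) * m * real n)
                  * (\<Sum>i<n. (norm (y0 i + gr i xs))\<^sup>2))"
    proof (rule main_bound[OF n_pos m_pos])
      show "0 < \<alpha>" using ab by simp
      show "\<alpha> * m * real n < 1" by (rule b)
      show "(\<Sum>i<n. gr i xs) = - (m * real n) *\<^sub>R xs" by (rule fp)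
      fix x
      have di: "(norm (gr i x - gr i xs))\<^sup>2 \<le> L\<^sup>2 * (norm (x - xs))\<^sup>2" if i: "i < n" for i
      proof -
        have "norm (gr i x - gr i xs) \<le> L * norm (x - xs)"
          using all[rule_format, OF i] unfolding L_smooth_grad_def by blast
        then have "(norm (gr i x - gr i xs))\<^sup>2 \<le> (L * norm (x - xs))\<^sup>2"
          by (intro power_mono) auto
        then show ?thesis by (simp add: power_mult_distrib)
      qed
      have K: "(\<Sum>i<n. (norm (gr i x - gr i xs))\<^sup>2) \<le> (real n * L\<^sup>2) * (norm (x - xs))\<^sup>2"
      proof -
        have "(\<Sum>i<n. (norm (gr i x - gr i xs))\<^sup>2) \<le> (\<Sum>i<n. L\<^sup>2 * (norm (x - xs))\<^sup>2)"
          using di by (intro sum_mono) auto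
        then show ?thesis by simp
      qed
      have dsum: "((\<lambda>x. \<Sum>i<n. f i x) has_derivative (\<lambda>h. (\<Sum>i<n. gr i z) \<bullet> h)) (at z)" for z
        using has_derivative_sum[of "{..<n}" "\<lambda>i. f i" "\<lambda>i h. gr i z \<bullet> h" "at z"] grad
        by (simp add: inner_sum_left)
      have cvx: "convex_on UNIV (\<lambda>x. \<Sum>i<n. f i x)" using sumF by (simp add: in_F0L_def)
      have Pnn: "0 \<le> ((\<Sum>i<n. gr i x) - (\<Sum>i<n. gr i xs)) \<bullet> (x - xs)"
        by (rule monotone_grad[OF cvx dsum])
      have Pnn': "0 \<le> (x - xs) \<bullet> (\<Sum>i<n. gr i x - gr i xs)"
        using Pnn by (simp add: sum_subtractf inner_commute)
      have qL: "\<alpha> / (1 - \<alpha> * m * real n) * (real n * L\<^sup>2) \<le> m * real n"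
      proof -
        have h: "\<alpha> * (L\<^sup>2 + m\<^sup>2 * real n) * real n \<le> m * real n" using a2 by (intro mult_right_mono) auto
        show ?thesis using b1 h by (simp add: field_simps power2_eq_square)
      qed
      show "\<alpha> / (1 - \<alpha> * m * real n) * (\<Sum>i<n. (norm (gr i x - gr i xs))\<^sup>2)
       \<le> m * real n * (norm (x - xs))\<^sup>2 + 2 * ((x - xs) \<bullet> (\<Sum>i<n. gr i x - gr i xs))"
        by (rule arith2[OF _ K _ qL Pnn']) (use ab b1 in auto)
    qed
  qed
  have P3: "let \<alpha> = m / (m\<^sup>2 * real n + L\<^sup>2) in
        \<forall>k. expect_idx n k (\<lambda>I.
                (norm (sdca_x n m \<alpha> gr y0 I k - xs))\<^sup>2
                + 1 / (L\<^sup>2 * real n)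
                  * (\<Sum>i<n. (norm (sdca_y n m \<alpha> gr y0 I k i + gr i xs))\<^sup>2))
             \<le> (1 - m\<^sup>2 / (m\<^sup>2 * real n + L\<^sup>2)) ^ k *
               ((norm (sdca_x n m \<alpha> gr y0 (\<lambda>_. 0) 0 - xs))\<^sup>2
                + 1 / (L\<^sup>2 * real n) * (\<Sum>i<n. (norm (y0 i + gr i xs))\<^sup>2))"
    if all: "\<forall>i<n. L_smooth_grad L (gr i)"
  proof -
    define \<alpha> where "\<alpha> = m / (m\<^sup>2 * real n + L\<^sup>2)"
    have den: "m\<^sup>2 * real n + L\<^sup>2 > 0" using L_pos m_pos npos by (simp add: add_pos_pos)
    have ab: "0 < \<alpha> \<and> \<alpha> \<le> m / (L\<^sup>2 + m\<^sup>2 * real n)"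
      using den m_pos by (simp add: \<alpha>_def add.commute)
    have c: "\<alpha> / ((1 - \<alpha> * m * real n) * m * real n) = 1 / (L\<^sup>2 * real n)"
    proof -
      have o: "1 - \<alpha> * m * real n = L\<^sup>2 / (m\<^sup>2 * real n + L\<^sup>2)"
        unfolding \<alpha>_def using den by (simp add: field_simps power2_eq_square)
      obtain D where D: "D = m\<^sup>2 * real n + L\<^sup>2" by blast
      have Dp: "D > 0" using den D by simp
      show ?thesis unfolding o unfolding \<alpha>_def D[symmetric] using Dp m_pos npos L_pos by (simp add: field_simps)
    qed
    have r: "1 - m * \<alpha> = 1 - m\<^sup>2 / (m\<^sup>2 * real n + L\<^sup>2)"
      unfolding \<alpha>_def by (simp add: power2_eq_square)
    show ?thesis using P2[OF all, rule_format, OF ab] unfolding Let_def \<alpha>_def[symmetric] c r by simp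
  qed
  show ?thesis using P1 P2 P3 by blast
qed

end
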